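(* Let $\varphi:(0,1]\to[0,1]$ be an increasing submultiplicative function (i.e. $\varphi(xy)\le\varphi(x)\varphi(y)$ for $x,y\in(0,1]$) such that $\varphi(\lambda)<1$ for some $\lambda\in(0,1)$. Then there is a constant $C>0$ such that $$\varphi(x)\le \frac{C}{1+\log(1/x)}\qquad\text{for all }x\in(0,1].$$ *)

theory Defs
  imports Complex_Main
begin

end

theory Submission
  imports Defs
begin

theorem lemma2p1:
  fixes \<phi> :: "real \<Rightarrow> real"
  assumes range: "\<And>x. x \<in> {0<..1} \<Longrightarrow> \<phi> x \<in> {0..1}"
    and incr: "mono_on {0<..1} \<phi>"
    and submult: "\<And>x y. x \<in> {0<..1} \<Longrightarrow> y \<in> {0<..1} \<Longrightarrow> \<phi> (x * y) \<le> \<phi> x * \<phi> y"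
    and lam: "\<exists>l\<in>{0<..<1}. \<phi> l < 1"
  shows "\<exists>C>0. \<forall>x\<in>{0<..1}. \<phi> x \<le> C / (1 + ln (1 / x))"
proof -
  obtain l where l0: "0 < l" and l1: "l < 1" and pl: "\<phi> l < 1" using lam by auto
  define q where "q = max (\<phi> l) (1/2)"
  have q0: "0 < q" and q1: "q < 1" and plq: "\<phi> l \<le> q" using pl by (auto simp: q_def)
  define a where "a = 1/q - 1"
  have a0: "a > 0" using q0 q1 by (simp add: a_def field_simps)
  define L where "L = ln (1/l)"
  have L0: "L > 0" using l0 l1 by (simp add: L_def ln_div)
  define M where "M = max (1+L) (L/a)"
  have M0: "M > 0" using L0 by (simp add: M_def)
  have pow: "\<phi> (l^n) \<le> q^n" for n
  proof (induction n)
    case 0 then show ?case using range[of 1] by simp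
  next
    case (Suc n)
    have ln: "l^n \<in> {0<..1}" using l0 l1 by (simp add: power_le_one)
    have "\<phi> (l^Suc n) = \<phi> (l * l^n)" by simp
    also have "\<dots> \<le> \<phi> l * \<phi> (l^n)" using submult[of l "l^n"] ln l0 l1 by simp
    also have "\<dots> \<le> q * q^n" using Suc.IH plq range[OF ln] range[of l] l0 l1 q0
      by (intro mult_mono) auto
    finally show ?case by simp
  qed
  have bern: "q^n * (1 + real n * a) \<le> 1" for n
  proof -
    have "1 + real n * a \<le> (1+a)^n" using a0 by (intro Bernoulli_inequality) simp
    also have "(1+a)^n = 1 / q^n" by (simp add: a_def power_divide)
    finally show ?thesis using q0 by (simp add: field_simps)
  qed
  show ?thesis
  proof (intro exI[of _ M] conjI ballI M0)
    fix x :: real assume x: "x \<in> {0<..1}"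
    have lnx: "ln (1/x) \<ge> 0" using x by (simp add: ln_div)
    define n where "n = nat (floor (ln (1/x) / L))"
    have fl: "real n = of_int (floor (ln (1/x) / L))" using lnx L0 by (simp add: n_def)
    have n1: "real n \<le> ln (1/x) / L" using fl by linarith
    have n2: "ln (1/x) / L < real n + 1" using fl by linarith
    have nL1: "real n * L \<le> ln (1/x)" using n1 L0 by (simp add: field_simps)
    have nL2: "ln (1/x) < (real n + 1) * L" using n2 L0 by (simp add: field_simps)
    have "ln x \<le> ln (l^n)"
      using nL1 x l0 by (simp add: ln_realpow L_def ln_div)
    hence xl: "x \<le> l^n" using x l0 by simp
    have ln: "l^n \<in> {0<..1}" using l0 l1 by (simp add: power_le_one)
    have px: "\<phi> x \<le> q^n" using mono_onD[OF incr x ln xl] pow[of n] by simp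
    have pos: "1 + ln (1/x) > 0" using lnx by simp
    have "1 + ln (1/x) \<le> (1 + L) + real n * L" using nL2 by (simp add: algebra_simps)
    also have "\<dots> \<le> M + real n * (M * a)"
    proof -
      have "L / a \<le> M" by (simp add: M_def)
      hence "L \<le> M * a" using a0 by (simp add: field_simps)
      hence "real n * L \<le> real n * (M * a)" by (simp add: mult_left_mono)
      moreover have "1 + L \<le> M" by (simp add: M_def)
      ultimately show ?thesis by simp
    qed
    also have "\<dots> = M * (1 + real n * a)" by (simp add: algebra_simps)
    finally have h: "1 + ln (1/x) \<le> M * (1 + real n * a)" .
    have "\<phi> x * (1 + ln (1/x)) \<le> q^n * (M * (1 + real n * a))"
      using px h range[OF x] pos by (intro mult_mono) auto
    also have "\<dots> = M * (q^n * (1 + real n * a))" by simp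
    also have "\<dots> \<le> M" using bern[of n] M0 by (simp add: mult_left_le)
    finally show "\<phi> x \<le> M / (1 + ln (1/x))" using pos by (simp add: field_simps)
  qed
qed

end
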